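(* Let $s\ge 1$, $q=4^{2s}$, and let $\theta$ be the automorphism of $F_q$ given by $\theta(a)=a^{4^s}$. Let $n$ be an even positive integer and let $C$ be a skew cyclic code of length $n$ over $F_q$ with respect to $\theta$. If $C$ is a reversible DNA code, then so is its dual code $C^\perp$.
   Context: $F_q[x;\theta]$ is the skew polynomial ring with multiplication determined by $xa=\theta(a)x$. A skew cyclic code of length $n$ is a linear code $C\subseteq F_q^n$ such that $(\theta(c_{n-1}),\theta(c_0),\ldots,\theta(c_{n-2}))\in C$ whenever $(c_0,\ldots,c_{n-1})\in C$. $C^\perp$ is the dual with respect to the standard inner product $\sum_i u_iv_i$ on $F_q^n$. DNA correspondence: there is a fixed bijection $\tau:F_{4^{2s}}\to\{A,T,G,C\}^{2s}$ such that for every $\beta$, $\tau(\beta^{4^s})$ is the reverse of the string $\tau(\beta)$; it extends to $\phi:F_q^n\to\{A,T,G,C\}^{2sn}$ by concatenation, $\phi(c_0,\ldots,c_{n-1})=(\tau(c_0),\ldots,\tau(c_{n-1}))$. A code $C\subseteq F_q^n$ is a reversible DNA code if the reverse string $\phi(c)^r$ lies in $\phi(C)$ for all $c\in C$; equivalently, $(\theta(c_{n-1}),\ldots,\theta(c_1),\theta(c_0))\in C$ for every $(c_0,\ldots,c_{n-1})\in C$. *)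

theory Defs
  imports Main
begin

definition linear_code :: "nat \<Rightarrow> 'a::field list set \<Rightarrow> bool" where
  "linear_code n C \<longleftrightarrow>
     C \<subseteq> {v. length v = n} \<and> replicate n 0 \<in> C \<and>
     (\<forall>u\<in>C. \<forall>v\<in>C. map2 (+) u v \<in> C) \<and>
     (\<forall>a. \<forall>u\<in>C. map (\<lambda>x. a * x) u \<in> C)"

definition skew_cyclic :: "('a::field \<Rightarrow> 'a) \<Rightarrow> nat \<Rightarrow> 'a list set \<Rightarrow> bool" where
  "skew_cyclic \<theta> n C \<longleftrightarrow> linear_code n C \<and>
     (\<forall>c\<in>C. map \<theta> (last c # butlast c) \<in> C)"

definition dual_code :: "nat \<Rightarrow> 'a::field list set \<Rightarrow> 'a list set" where
  "dual_code n C = {u. length u = n \<and> (\<forall>c\<in>C. (\<Sum>i<n. u ! i * c ! i) = 0)}"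

datatype nucleotide = Ade | Thy | Gua | Cyt

definition dna_phi :: "('a \<Rightarrow> nucleotide list) \<Rightarrow> 'a list \<Rightarrow> nucleotide list" where
  "dna_phi \<tau> c = concat (map \<tau> c)"

definition reversible_dna :: "('a \<Rightarrow> nucleotide list) \<Rightarrow> 'a list set \<Rightarrow> bool" where
  "reversible_dna \<tau> C \<longleftrightarrow> (\<forall>c\<in>C. rev (dna_phi \<tau> c) \<in> dna_phi \<tau> ` C)"

end

theory Submission
  imports Defs "HOL-Number_Theory.Residues" "HOL-Computational_Algebra.Primes"
begin

lemma two_zero_frob:
  fixes a b :: "'a::comm_ring_1"
  assumes "(1::'a) + 1 = 0"
  shows "(a + b) ^ (2 ^ k) = a ^ (2 ^ k) + b ^ (2 ^ k)"
proof (induction k)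
  case 0 then show ?case by simp
next
  case (Suc k)
  have sq: "(x + y) ^ 2 = x ^ 2 + y ^ 2" for x y :: 'a
  proof -
    have "(x + y) ^ 2 = x^2 + y^2 + (1 + 1) * x * y" by (simp add: power2_eq_square algebra_simps)
    then show ?thesis using assms by simp
  qed
  have "(a + b) ^ (2 ^ Suc k) = ((a + b) ^ (2 ^ k)) ^ 2"
    by (simp add: power_mult[symmetric] mult.commute)
  also have "\<dots> = (a ^ (2 ^ k)) ^ 2 + (b ^ (2 ^ k)) ^ 2" using Suc sq by simp
  also have "\<dots> = a ^ (2 ^ Suc k) + b ^ (2 ^ Suc k)"
    by (simp add: power_mult[symmetric] mult.commute)
  finally show ?case .
qed

lemma char_two:
  assumes "card (UNIV :: 'a::{finite,field} set) = 4 ^ (2 * s)"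
  shows "(1::'a) + 1 = 0"
proof -
  have pos: "CHAR('a) > 0" by (rule finite_imp_CHAR_pos) simp
  have pr: "prime CHAR('a)" using pos prime_CHAR_semidom by blast
  have "CHAR('a) dvd 2 ^ (4 * s)"
    using CHAR_dvd_CARD[where 'a='a] assms by (simp add: power_mult)
  then have "CHAR('a) dvd 2" using pr prime_dvd_power by blast
  then have "CHAR('a) = 2" using pr
    by (metis two_is_prime_nat primes_dvd_imp_eq)
  then have "of_nat 2 = (0::'a)" by (metis of_nat_CHAR)
  then show ?thesis by simp
qed

lemma power_card_same:
  fixes x :: "'a::{finite,field}"
  shows "x ^ card (UNIV :: 'a set) = x"
proof (cases "x = 0")
  case False
  have "x * (\<Prod>y\<in>UNIV-{0}. x * y) = x * x ^ (card (UNIV :: 'a set) - 1) * \<Prod>(UNIV-{0})"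
    by (simp add: prod.distrib mult_ac)
  also have "x * x ^ (card (UNIV :: 'a set) - 1) = x ^ Suc (card (UNIV :: 'a set) - 1)"
    by (subst power_Suc) auto
  also have "Suc (card (UNIV :: 'a set) - 1) = card (UNIV :: 'a set)"
    using finite_UNIV_card_ge_0[where ?'a = 'a] by simp
  also have "(\<Prod>y\<in>UNIV-{0}. x * y) = (\<Prod>y\<in>UNIV-{0}. y)"
    by (rule prod.reindex_bij_witness[of _ "\<lambda>y. y / x" "\<lambda>y. x * y"]) (use False in auto)
  finally show ?thesis
    by simp
qed (use finite_UNIV_card_ge_0[where ?'a = 'a] in auto)

lemma concat_inj:
  assumes "\<And>x. length (\<tau> x) = k" "k > 0" "length xs = length ys"
    "concat (map \<tau> xs) = concat (map \<tau> ys)"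
  shows "map \<tau> xs = map \<tau> ys"
  using assms(3,4)
proof (induction xs arbitrary: ys)
  case Nil then show ?case by simp
next
  case (Cons x xs)
  then obtain y ys' where ys: "ys = y # ys'" by (cases ys) auto
  from Cons.prems ys have "\<tau> x @ concat (map \<tau> xs) = \<tau> y @ concat (map \<tau> ys')" by simp
  then have "\<tau> x = \<tau> y \<and> concat (map \<tau> xs) = concat (map \<tau> ys')"
    using assms(1) by (simp add: append_eq_append_conv)
  then show ?case using Cons ys by simp
qed

theorem corollary2:
  fixes s n :: nat
    and \<tau> :: "'a::{finite,field} \<Rightarrow> nucleotide list"
    and C :: "'a list set"
  assumes "s \<ge> 1"
    and "card (UNIV :: 'a set) = 4 ^ (2 * s)"
    and "bij_betw \<tau> UNIV {w. length w = 2 * s}"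
    and "\<forall>\<beta>. \<tau> (\<beta> ^ (4 ^ s)) = rev (\<tau> \<beta>)"
    and "even n" and "n > 0"
    and "skew_cyclic (\<lambda>a. a ^ (4 ^ s)) n C"
    and "reversible_dna \<tau> C"
  shows "reversible_dna \<tau> (dual_code n C)"
proof -
  define \<theta> :: "'a \<Rightarrow> 'a" where "\<theta> = (\<lambda>a. a ^ (4 ^ s))"
  have two: "(1::'a) + 1 = 0" using char_two assms(2) by blast
  have th_add: "\<theta> (a + b) = \<theta> a + \<theta> b" for a b
    using two_zero_frob[OF two, of a b "2 * s"] by (simp add: \<theta>_def power_mult)
  have th_mult: "\<theta> (a * b) = \<theta> a * \<theta> b" for a b
    by (simp add: \<theta>_def power_mult_distrib)
  have th_0: "\<theta> 0 = 0" by (simp add: \<theta>_def)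
  have th_th: "\<theta> (\<theta> a) = a" for a
    using power_card_same[of a] assms(2)
    by (simp add: \<theta>_def power_mult[symmetric] power_add[symmetric] mult_2)
  have th_sum: "\<theta> (\<Sum>i<m. f i) = (\<Sum>i<m. \<theta> (f i))" for m :: nat and f
    by (induction m) (simp_all add: th_0 th_add)
  have tlen: "length (\<tau> x) = 2 * s" for x
    using assms(3) by (auto simp: bij_betw_def)
  have tinj: "inj \<tau>" using assms(3) by (simp add: bij_betw_def)
  have tau_th: "\<tau> (\<theta> b) = rev (\<tau> b)" for b using assms(4) by (simp add: \<theta>_def)
  have revphi: "rev (dna_phi \<tau> c) = dna_phi \<tau> (map \<theta> (rev c))" for c
    by (simp add: dna_phi_def rev_concat rev_map tau_th comp_def)
  have lin: "linear_code n C" using assms(7) by (simp add: skew_cyclic_def)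
  have Clen: "c \<in> C \<Longrightarrow> length c = n" for c using lin by (auto simp: linear_code_def)
  have Crev: "map \<theta> (rev c) \<in> C" if "c \<in> C" for c
  proof -
    from assms(8) that obtain d where d: "d \<in> C" "rev (dna_phi \<tau> c) = dna_phi \<tau> d"
      by (auto simp: reversible_dna_def)
    have e: "concat (map \<tau> (map \<theta> (rev c))) = concat (map \<tau> d)"
      using d(2) revphi[of c] unfolding dna_phi_def by simp
    have l: "length (map \<theta> (rev c)) = length d"
      using Clen[OF that] Clen[OF d(1)] by simp
    have k: "2 * s > 0" using assms(1) by simp
    have "map \<tau> (map \<theta> (rev c)) = map \<tau> d"
      by (rule concat_inj[OF tlen k l e])
    then have "map \<theta> (rev c) = d" using tinj inj_map_eq_map[OF tinj] by (metis map_map)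
    then show ?thesis using d by simp
  qed
  show ?thesis unfolding reversible_dna_def
  proof
    fix u assume u: "u \<in> dual_code n C"
    then have ulen: "length u = n" and uo: "\<And>c. c \<in> C \<Longrightarrow> (\<Sum>i<n. u ! i * c ! i) = 0"
      by (auto simp: dual_code_def)
    have "map \<theta> (rev u) \<in> dual_code n C"
      unfolding dual_code_def
    proof (intro CollectI conjI ballI)
      show "length (map \<theta> (rev u)) = n" using ulen by simp
      fix c assume c: "c \<in> C"
      have cl: "length c = n" using Clen[OF c] .
      have "0 = \<theta> (\<Sum>i<n. u ! i * map \<theta> (rev c) ! i)" using uo[OF Crev[OF c]] th_0 by simp
      also have "\<dots> = (\<Sum>i<n. \<theta> (u ! i) * c ! (n - Suc i))"
        using cl by (simp add: th_sum th_mult rev_nth th_th)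
      also have "\<dots> = (\<Sum>i<n. \<theta> (u ! (n - Suc i)) * c ! i)"
        by (rule sum.reindex_bij_witness[of _ "\<lambda>i. n - Suc i" "\<lambda>i. n - Suc i"]) auto
      also have "\<dots> = (\<Sum>i<n. map \<theta> (rev u) ! i * c ! i)"
        using ulen by (intro sum.cong) (auto simp: rev_nth)
      finally show "(\<Sum>i<n. map \<theta> (rev u) ! i * c ! i) = 0" by simp
    qed
    then show "rev (dna_phi \<tau> u) \<in> dna_phi \<tau> ` dual_code n C"
      using revphi[of u] by blast
  qed
qed

end
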